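(* Let $s\in\{0,1\}^n$, $p\in[0,1)$, and $x\in\{0,1\}^k$ with $k\ge2$. Then $$N_x=\frac{1}{(1-p)^k}\left(E_x-\sum_{i=k+1}^{n}\sum_{y\in Y_i(x)}(-1)^{|y|-|x|+1}E_y\binom{y}{x}'\left(\frac{p}{1-p}\right)^{i-k}\right).$$
   Context: Deletion channel: a trace $\tilde S$ of $s$ is obtained by deleting each bit of $s$ independently with probability $p$. For a binary string $y$, $N_y$ is the number of positions at which $y$ occurs as a (contiguous) substring of $s$, and $E_y$ is the expected number of positions at which $y$ occurs as a substring of $\tilde S$. For a string $z$, $z[2:-2]$ is $z$ with its first and last symbols removed; $\binom{y}{z}$ is the number of ways to delete $|y|-|z|$ symbols of $y$ to obtain $z$, and $\binom{y}{z}'=\binom{y[2:-2]}{z[2:-2]}$. $Y_i(x)$ is the set of binary strings of length $i$ that are supersequences of $x$ with the same first bit and same last bit as $x$. *)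

theory Defs
  imports "HOL-Analysis.Analysis" "HOL-Library.Sublist"
begin

definition occ :: "bool list \<Rightarrow> bool list \<Rightarrow> nat" where
  "occ y s = card {i. i + length y \<le> length s \<and> take (length y) (drop i s) = y}"

text \<open>Expected number of occurrences of y in a trace of s through the deletion channel
  with deletion probability p: the set T of retained positions has probability
  (1-p)^|T| p^(n-|T|), and the trace is nths s T.\<close>
definition exp_occ :: "real \<Rightarrow> bool list \<Rightarrow> bool list \<Rightarrow> real" where
  "exp_occ p s y = (\<Sum>T\<in>Pow {0..<length s}.
      (1 - p) ^ card T * p ^ (length s - card T) * real (occ y (nths s T)))"

definition binom_seq :: "bool list \<Rightarrow> bool list \<Rightarrow> nat" where
  "binom_seq y z = card {T. T \<subseteq> {0..<length y} \<and> card T = length z \<and> nths y T = z}"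

definition strip :: "bool list \<Rightarrow> bool list" where
  "strip z = butlast (tl z)"

definition binom' :: "bool list \<Rightarrow> bool list \<Rightarrow> nat" where
  "binom' y z = binom_seq (strip y) (strip z)"

definition Yset :: "nat \<Rightarrow> bool list \<Rightarrow> bool list set" where
  "Yset i x = {y. length y = i \<and> subseq x y \<and> hd y = hd x \<and> last y = last x}"

end

theory Submission
  imports Defs
begin


lemma pow_suc_split:
  "(\<Sum>T\<in>Pow {0..<Suc n}. f T) = (\<Sum>T\<in>Pow {0..<n}. f (Suc ` T)) + (\<Sum>T\<in>Pow {0..<n}. f (insert 0 (Suc ` T)))"
proof -
  have e: "Pow {0..<Suc n} = image Suc ` Pow {0..<n} \<union> insert 0 ` (image Suc ` Pow {0..<n})"
    by (simp add: atLeast0_lessThan_Suc_eq_insert_0 Pow_insert image_Pow_surj)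
  have i1: "inj_on (image Suc) (Pow {0..<n})" by (meson inj_Suc inj_image_eq_iff inj_onI)
  have i2: "inj_on (\<lambda>T. insert 0 (Suc ` T)) (Pow {0..<n})"
  proof (rule inj_onI)
    fix A B assume "insert 0 (Suc ` A) = insert (0::nat) (Suc ` B)"
    then have "Suc ` A = Suc ` B" by (metis Diff_insert_absorb imageE nat.distinct(1))
    then show "A = B" by (simp add: inj_image_eq_iff)
  qed
  have d: "image Suc ` Pow {0..<n} \<inter> insert 0 ` (image Suc ` Pow {0..<n}) = {}" by auto
  have "(\<Sum>T\<in>Pow {0..<Suc n}. f T) = (\<Sum>T\<in>image Suc ` Pow {0..<n}. f T) + (\<Sum>T\<in>insert 0 ` (image Suc ` Pow {0..<n}). f T)"
    unfolding e by (rule sum.union_disjoint) (use d in auto)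
  also have "\<dots> = (\<Sum>T\<in>Pow {0..<n}. f (Suc ` T)) + (\<Sum>T\<in>Pow {0..<n}. f (insert 0 (Suc ` T)))"
    using sum.reindex[OF i1, of f] sum.reindex[OF i2, of f] by (simp add: image_image comp_def)
  finally show ?thesis .
qed

lemma nths_Suc_img: "nths (a # s) (Suc ` T) = nths s T"
  by (simp add: nths_Cons image_iff)

lemma nths_ins0: "nths (a # s) (insert 0 (Suc ` T)) = a # nths s T"
  by (simp add: nths_Cons image_iff)

lemma nths_cong_len: "(\<And>i. i < length xs \<Longrightarrow> i \<in> A \<longleftrightarrow> i \<in> B) \<Longrightarrow> nths xs A = nths xs B"
  unfolding nths_def by (rule arg_cong[where f="map fst"], rule filter_cong) (auto simp: set_zip)

lemma length_nths_sub: "W \<subseteq> {0..<length s} \<Longrightarrow> length (nths s W) = card W"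
proof -
  assume "W \<subseteq> {0..<length s}"
  then have "{i. i < length s \<and> i \<in> W} = W" by auto
  then show ?thesis by (simp add: length_nths)
qed

lemma Max_Suc_img: "finite W \<Longrightarrow> W \<noteq> {} \<Longrightarrow> Max (Suc ` W) = Suc (Max W)"
  by (simp add: mono_Max_commute mono_Suc)
lemma Min_Suc_img: "finite W \<Longrightarrow> W \<noteq> {} \<Longrightarrow> Min (Suc ` W) = Suc (Min W)"
  by (simp add: mono_Min_commute mono_Suc)



lemma wsplit: fixes p :: real and f :: "nat set \<Rightarrow> real" shows "(\<Sum>T\<in>Pow {0..<Suc n}. (1-p)^card T * p^(Suc n - card T) * f T) =
   p * (\<Sum>T\<in>Pow{0..<n}. (1-p)^card T * p^(n - card T) * f (Suc ` T))
 + (1-p) * (\<Sum>T\<in>Pow{0..<n}. (1-p)^card T * p^(n - card T) * f (insert 0 (Suc ` T)))"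
proof -
  have c1: "card (Suc ` T) = card T" for T by (simp add: card_image)
  have c2: "T \<subseteq> {0..<n} \<Longrightarrow> card (insert 0 (Suc ` T)) = Suc (card T)" for T
    using finite_subset[of T "{0..<n}"] by (simp add: card_image image_iff)
  have c3: "T \<subseteq> {0..<n} \<Longrightarrow> card T \<le> n" for T
    using card_mono[of "{0..<n}" T] by simp
  show ?thesis
    apply (simp only: pow_suc_split sum_distrib_left)
    apply (rule arg_cong2[where f="(+)"]; rule sum.cong[OF refl])
    subgoal for T using c3[of T] by (simp add: c1 Suc_diff_le mult_ac)
    subgoal for T using c3[of T] by (simp add: c2 mult_ac)
    done
qed

lemma wsum1: "(\<Sum>T\<in>Pow {0..<n}. (1-p)^card T * p^(n - card T)) = (1::real)"
proof (induction n)
  case 0 then show ?case by simp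
next
  case (Suc n)
  have "(\<Sum>T\<in>Pow {0..<Suc n}. (1-p)^card T * p^(Suc n - card T)) = 
     (\<Sum>T\<in>Pow {0..<Suc n}. (1-p)^card T * p^(Suc n - card T) * 1)" by simp
  also have "\<dots> = 1" unfolding wsplit using Suc by simp
  finally show ?case .
qed

lemma occ_Cons:
  assumes "y \<noteq> []"
  shows "occ y (a # t) = occ y t + (if take (length y) (a # t) = y then 1 else 0)"
proof -
  let ?m = "length y"
  define S where "S = {i. i + ?m \<le> length t \<and> take ?m (drop i t) = y}"
  define S' where "S' = {i. i + ?m \<le> length (a#t) \<and> take ?m (drop i (a#t)) = y}"
  have fS: "finite S" unfolding S_def by (rule finite_subset[of _ "{..length t}"]) auto
  have e: "S' = (if take ?m (a # t) = y then {0} else {}) \<union> Suc ` S"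
  proof (rule set_eqI)
    fix i show "i \<in> S' \<longleftrightarrow> i \<in> (if take ?m (a # t) = y then {0} else {}) \<union> Suc ` S"
    proof (cases i)
      case 0
      have "take ?m (a#t) = y \<Longrightarrow> ?m \<le> length (a#t)" by (drule arg_cong[where f=length]) simp
      then show ?thesis using 0 by (auto simp: S'_def)
    next
      case (Suc j) then show ?thesis by (auto simp: S'_def S_def)
    qed
  qed
  have "occ y (a#t) = card S'" unfolding occ_def S'_def ..
  also have "\<dots> = (if take ?m (a # t) = y then 1 else 0) + card (Suc ` S)"
    unfolding e using fS by (subst card_Un_disjoint) auto
  also have "card (Suc ` S) = occ y t" unfolding occ_def S_def by (simp add: card_image)
  finally show ?thesis by simp
qed



definition PL :: "real \<Rightarrow> bool list \<Rightarrow> bool list \<Rightarrow> real" where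
  "PL p s y = (\<Sum>T\<in>Pow {0..<length s}. (1-p)^card T * p^(length s - card T) *
      (if take (length y) (nths s T) = y then 1 else 0))"

definition PR :: "real \<Rightarrow> bool list \<Rightarrow> bool list \<Rightarrow> real" where
  "PR p s y = (\<Sum>W\<in>Pow {0..<length s}. (if nths s W = y then (1-p)^length y * p^(Max W + 1 - length y) else 0))"

definition ER :: "real \<Rightarrow> bool list \<Rightarrow> bool list \<Rightarrow> real" where
  "ER p s y = (\<Sum>W\<in>Pow {0..<length s}. (if nths s W = y then (1-p)^length y * p^(Max W + 1 - Min W - length y) else 0))"

lemma card_le_span: "finite W \<Longrightarrow> W \<noteq> {} \<Longrightarrow> card W \<le> Max W + 1 - Min W"
proof -
  assume f: "finite W" and ne: "W \<noteq> {}"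
  have "W \<subseteq> {Min W..Max W}" using f ne by auto
  then have "card W \<le> card {Min W..Max W}" by (rule card_mono[rotated]) simp
  then show ?thesis by simp
qed

lemma PLcons:
  assumes "y \<noteq> []"
  shows "(\<Sum>T\<in>Pow {0..<length s}. (1-p)^card T * p^(length s - card T) *
      (if take (length y) (a # nths s T) = y then 1 else 0)) =
    (if hd y = a then (if tl y = [] then 1 else PL p s (tl y)) else 0)"
proof -
  obtain b y' where y: "y = b # y'" using assms by (cases y) auto
  have e: "take (length y) (a # t) = y \<longleftrightarrow> a = b \<and> take (length y') t = y'" for t
    by (simp add: y)
  show ?thesis
  proof (cases "a = b")
    case False then show ?thesis by (simp add: e y)
  next
    case True
    show ?thesis
    proof (cases "y' = []")
      case True
      then show ?thesis using \<open>a = b\<close> wsum1[of p "length s"] by (simp add: e y)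
    next
      case False
      then show ?thesis using \<open>a = b\<close> by (simp add: e y PL_def)
    qed
  qed
qed

lemma nths_ne: "W \<subseteq> {0..<length s} \<Longrightarrow> W \<noteq> {} \<Longrightarrow> nths s W \<noteq> []"
  using length_nths_sub[of W s] finite_subset[of W "{0..<length s}"] by auto

lemma PRins:
  fixes p :: real
  assumes "y \<noteq> []"
  shows "(\<Sum>W\<in>Pow {0..<length s}. (if a # nths s W = y then (1-p)^length y * p^(Max (insert 0 (Suc ` W)) + 1 - length y) else 0)) =
    (1-p) * (if hd y = a then (if tl y = [] then 1 else PR p s (tl y)) else 0)"
proof -
  obtain b y' where y: "y = b # y'" using assms by (cases y) auto
  show ?thesis
  proof (cases "a = b")
    case False then show ?thesis by (simp add: y)
  next
    case True
    show ?thesis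
    proof (cases "y' = []")
      case True
      have "(\<Sum>W\<in>Pow {0..<length s}. (if a # nths s W = y then (1-p)^length y * p^(Max (insert 0 (Suc ` W)) + 1 - length y) else 0))
         = (\<Sum>W\<in>Pow {0..<length s}. (if W = {} then 1-p else 0))"
        apply (rule sum.cong[OF refl])
        using nths_ne[of _ s] \<open>a = b\<close> True by (auto simp: y)
      also have "\<dots> = 1 - p" by (simp add: sum.delta')
      finally show ?thesis using \<open>a = b\<close> True by (simp add: y)
    next
      case False
      have "(\<Sum>W\<in>Pow {0..<length s}. (if a # nths s W = y then (1-p)^length y * p^(Max (insert 0 (Suc ` W)) + 1 - length y) else 0))
         = (\<Sum>W\<in>Pow {0..<length s}. (1-p) * (if nths s W = y' then (1-p)^length y' * p^(Max W + 1 - length y') else 0))"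
      proof (rule sum.cong[OF refl])
        fix W assume W: "W \<in> Pow {0..<length s}"
        show "(if a # nths s W = y then (1-p)^length y * p^(Max (insert 0 (Suc ` W)) + 1 - length y) else 0)
           = (1-p) * (if nths s W = y' then (1-p)^length y' * p^(Max W + 1 - length y') else 0)"
        proof (cases "W = {}")
          case True then show ?thesis using False by (simp add: y)
        next
          case ne: False
          have fW: "finite W" using W finite_subset by auto
          have M: "Max (insert 0 (Suc ` W)) = Suc (Max W)"
            using fW ne by (simp add: Max_insert Max_Suc_img)
          show ?thesis by (simp add: y M \<open>a = b\<close>)
        qed
      qed
      also have "\<dots> = (1-p) * PR p s y'" by (simp add: PR_def sum_distrib_left)
      finally show ?thesis using \<open>a = b\<close> False by (simp add: y)
    qed
  qed
qed



lemma PL_Cons: "PL p (a#s) y = p * PL p s y + (1-p) * (\<Sum>T\<in>Pow {0..<length s}. (1-p)^card T * p^(length s - card T) *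
      (if take (length y) (a # nths s T) = y then 1 else 0))"
  unfolding PL_def by (simp only: length_Cons wsplit nths_Suc_img nths_ins0)

lemma PR_Cons:
  fixes p :: real
  assumes yne: "y \<noteq> []"
  shows "PR p (a#s) y = p * PR p s y + (\<Sum>W\<in>Pow {0..<length s}. (if a # nths s W = y then (1-p)^length y * p^(Max (insert 0 (Suc ` W)) + 1 - length y) else 0))"
proof -
  have "PR p (a#s) y = (\<Sum>W\<in>Pow {0..<length s}. (if nths s W = y then (1-p)^length y * p^(Max (Suc ` W) + 1 - length y) else 0))
     + (\<Sum>W\<in>Pow {0..<length s}. (if a # nths s W = y then (1-p)^length y * p^(Max (insert 0 (Suc ` W)) + 1 - length y) else 0))"
    unfolding PR_def by (simp only: length_Cons pow_suc_split nths_Suc_img nths_ins0)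
  also have "(\<Sum>W\<in>Pow {0..<length s}. (if nths s W = y then (1-p)^length y * p^(Max (Suc ` W) + 1 - length y) else 0))
      = p * PR p s y"
    unfolding PR_def sum_distrib_left
  proof (rule sum.cong[OF refl])
    fix W assume W: "W \<in> Pow {0..<length s}"
    have fW: "finite W" using W finite_subset by auto
    show "(if nths s W = y then (1-p)^length y * p^(Max (Suc ` W) + 1 - length y) else 0) =
       p * (if nths s W = y then (1-p)^length y * p^(Max W + 1 - length y) else 0)"
    proof (cases "nths s W = y")
      case True
      then have "W \<noteq> {}" using yne by auto
      have "length y = card W" using True W length_nths_sub[of W s] by auto
      moreover have "card W \<le> Max W + 1" using card_le_span[OF fW \<open>W \<noteq> {}\<close>] by auto
      ultimately have "Max W + 2 - length y = Suc (Max W + 1 - length y)" by simp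
      then show ?thesis using True fW \<open>W \<noteq> {}\<close> by (simp add: Max_Suc_img)
    next
      case False
      then show ?thesis by auto
    qed
  qed
  finally show ?thesis by simp
qed

lemma PF: "y \<noteq> [] \<Longrightarrow> PL p s y = PR p s y"
proof (induction s arbitrary: y)
  case Nil then show ?case by (simp add: PL_def PR_def)
next
  case (Cons a s)
  show ?case
    unfolding PL_Cons PR_Cons[OF Cons.prems] PLcons[OF Cons.prems] PRins[OF Cons.prems]
    using Cons.IH Cons.prems by (cases y) auto
qed

lemma real_if01: "real (if b then 1 else 0) = (if b then 1 else 0)" by simp

lemma exp_occ_Cons:
  assumes "y \<noteq> []"
  shows "exp_occ p (a#s) y = exp_occ p s y + (1-p) * (if hd y = a then (if tl y = [] then 1 else PL p s (tl y)) else 0)"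
proof -
  have "exp_occ p (a#s) y = p * exp_occ p s y + (1-p) * (\<Sum>T\<in>Pow {0..<length s}. (1-p)^card T * p^(length s - card T) *
      real (occ y (a # nths s T)))"
    unfolding exp_occ_def by (simp only: length_Cons wsplit nths_Suc_img nths_ins0)
  also have "(\<Sum>T\<in>Pow {0..<length s}. (1-p)^card T * p^(length s - card T) * real (occ y (a # nths s T)))
    = exp_occ p s y + (\<Sum>T\<in>Pow {0..<length s}. (1-p)^card T * p^(length s - card T) *
      (if take (length y) (a # nths s T) = y then 1 else 0))"
    unfolding exp_occ_def occ_Cons[OF assms] by (simp add: sum.distrib algebra_simps real_if01)
  finally show ?thesis unfolding PLcons[OF assms] by (simp add: algebra_simps)
qed

lemma ER_Cons:
  fixes p :: real
  shows "ER p (a#s) y = ER p s y + (\<Sum>W\<in>Pow {0..<length s}. (if a # nths s W = y then (1-p)^length y * p^(Max (insert 0 (Suc ` W)) + 1 - length y) else 0))"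
proof -
  have "ER p (a#s) y = (\<Sum>W\<in>Pow {0..<length s}. (if nths s W = y then (1-p)^length y * p^(Max (Suc ` W) + 1 - Min (Suc ` W) - length y) else 0))
     + (\<Sum>W\<in>Pow {0..<length s}. (if a # nths s W = y then (1-p)^length y * p^(Max (insert 0 (Suc ` W)) + 1 - Min (insert 0 (Suc ` W)) - length y) else 0))"
    unfolding ER_def by (simp only: length_Cons pow_suc_split nths_Suc_img nths_ins0)
  also have "(\<Sum>W\<in>Pow {0..<length s}. (if a # nths s W = y then (1-p)^length y * p^(Max (insert 0 (Suc ` W)) + 1 - Min (insert 0 (Suc ` W)) - length y) else 0))
    = (\<Sum>W\<in>Pow {0..<length s}. (if a # nths s W = y then (1-p)^length y * p^(Max (insert 0 (Suc ` W)) + 1 - length y) else 0))"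
  proof (rule sum.cong[OF refl])
    fix W assume "W \<in> Pow {0..<length s}"
    then have "Min (insert 0 (Suc ` W)) = 0"
      using finite_subset[of W "{0..<length s}"] by (intro Min_eqI) auto
    then show "(if a # nths s W = y then (1-p)^length y * p^(Max (insert 0 (Suc ` W)) + 1 - Min (insert 0 (Suc ` W)) - length y) else 0)
      = (if a # nths s W = y then (1-p)^length y * p^(Max (insert 0 (Suc ` W)) + 1 - length y) else 0)" by simp
  qed
  also have "(\<Sum>W\<in>Pow {0..<length s}. (if nths s W = y then (1-p)^length y * p^(Max (Suc ` W) + 1 - Min (Suc ` W) - length y) else 0))
      = ER p s y"
    unfolding ER_def
  proof (rule sum.cong[OF refl])
    fix W assume W: "W \<in> Pow {0..<length s}"
    have fW: "finite W" using W finite_subset by auto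
    show "(if nths s W = y then (1-p)^length y * p^(Max (Suc ` W) + 1 - Min (Suc ` W) - length y) else 0) =
       (if nths s W = y then (1-p)^length y * p^(Max W + 1 - Min W - length y) else 0)"
      by (cases "W = {}") (auto simp: fW Max_Suc_img Min_Suc_img)
  qed
  finally show ?thesis by simp
qed



lemma lemA:
  fixes p :: real
  assumes "y \<noteq> []"
  shows "exp_occ p s y = ER p s y"
proof (induction s)
  case Nil
  have "occ y [] = 0" unfolding occ_def using assms by simp
  then show ?case using assms by (simp add: exp_occ_def ER_def)
next
  case (Cons a s)
  show ?case
    unfolding exp_occ_Cons[OF assms] ER_Cons PRins[OF assms] Cons.IH
    using PF[of "tl y" p s] by auto
qed



definition rk :: "nat set \<Rightarrow> nat \<Rightarrow> nat" where
  "rk A i = card {j\<in>A. j < i}"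

lemma rk_less: "finite A \<Longrightarrow> i \<in> A \<Longrightarrow> j \<in> A \<Longrightarrow> i < j \<Longrightarrow> rk A i < rk A j"
  unfolding rk_def by (rule psubset_card_mono) auto

lemma rk_bound: "finite A \<Longrightarrow> i \<in> A \<Longrightarrow> rk A i < card A"
  unfolding rk_def by (rule psubset_card_mono) auto

lemma rk_inj: "finite A \<Longrightarrow> inj_on (rk A) A"
  by (metis inj_onI linorder_neqE_nat rk_less less_irrefl)

lemma rk_img: "finite A \<Longrightarrow> rk A ` A = {0..<card A}"
proof -
  assume f: "finite A"
  have s: "rk A ` A \<subseteq> {0..<card A}" using rk_bound[OF f] by auto
  have "card (rk A ` A) = card {0..<card A}" using card_image[OF rk_inj[OF f]] by simp
  then show ?thesis using card_subset_eq[OF _ s] by simp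
qed

lemma rk_Min: "finite A \<Longrightarrow> A \<noteq> {} \<Longrightarrow> rk A (Min A) = 0"
  unfolding rk_def by auto

lemma rk_Max: "finite A \<Longrightarrow> A \<noteq> {} \<Longrightarrow> rk A (Max A) = card A - 1"
proof -
  assume f: "finite A" and ne: "A \<noteq> {}"
  have "{j\<in>A. j < Max A} = A - {Max A}" using f ne Max_ge[OF f] by (auto simp: order.order_iff_strict)
  then show ?thesis unfolding rk_def using f ne by simp
qed

lemma nths_rk: "finite W \<Longrightarrow> V \<subseteq> W \<Longrightarrow> nths (nths s W) (rk W ` V) = nths s V"
proof -
  assume f: "finite W" and V: "V \<subseteq> W"
  have "{i \<in> W. \<exists>j \<in> rk W ` V. card {i' \<in> W. i' < i} = j} = V"
    using inj_onD[OF rk_inj[OF f]] V unfolding rk_def[symmetric] by blast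
  then show ?thesis by (simp add: nths_nths)
qed

lemma lemB2:
  assumes W: "W \<subseteq> {0..<length s}" and ne: "W \<noteq> {}"
  shows "card {U. U \<subseteq> {0..<card W} \<and> 0 \<in> U \<and> card W - 1 \<in> U \<and> nths (nths s W) U = x}
       = card {V. V \<subseteq> W \<and> Min W \<in> V \<and> Max W \<in> V \<and> nths s V = x}"
proof -
  have f: "finite W" using W finite_subset by auto
  let ?L = "{U. U \<subseteq> {0..<card W} \<and> 0 \<in> U \<and> card W - 1 \<in> U \<and> nths (nths s W) U = x}"
  let ?R = "{V. V \<subseteq> W \<and> Min W \<in> V \<and> Max W \<in> V \<and> nths s V = x}"
  have inj: "inj_on (image (rk W)) ?R"
    by (rule inj_on_subset[OF inj_on_image_Pow[OF rk_inj[OF f]]]) auto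
  have "image (rk W) ` ?R = ?L"
  proof (rule set_eqI, rule iffI)
    fix U assume "U \<in> image (rk W) ` ?R"
    then obtain V where V: "V \<in> ?R" and U: "U = rk W ` V" by blast
    have "rk W (Max W) \<in> U" "rk W (Min W) \<in> U" using V U by auto
    then show "U \<in> ?L" using V U rk_img[OF f] rk_Min[OF f ne] rk_Max[OF f ne] nths_rk[OF f, of V s]
      by auto
  next
    fix U assume U: "U \<in> ?L"
    define V where "V = {i\<in>W. rk W i \<in> U}"
    have "rk W ` V = U" using U rk_img[OF f] unfolding V_def by auto
    moreover have "V \<in> ?R"
    proof -
      have "{i \<in> W. \<exists>j \<in> U. card {i' \<in> W. i' < i} = j} = V" unfolding V_def rk_def by auto
      then have "nths s V = x" using U by (simp add: nths_nths)
      then show ?thesis using U rk_Min[OF f ne] rk_Max[OF f ne] f ne unfolding V_def by auto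
    qed
    ultimately show "U \<in> image (rk W) ` ?R" by blast
  qed
  then show ?thesis using card_image[OF inj] by simp
qed



lemma nths_frame:
  assumes T: "T \<subseteq> {0..<length mid}"
  shows "nths (a # mid @ [b]) (insert 0 (insert (Suc (length mid)) (Suc ` T))) = a # nths mid T @ [b]"
proof -
  let ?U = "insert 0 (insert (Suc (length mid)) (Suc ` T))"
  have "nths (a # mid @ [b]) ?U = a # nths (mid @ [b]) {j. Suc j \<in> ?U}"
    by (simp add: nths_Cons)
  also have "nths (mid @ [b]) {j. Suc j \<in> ?U} = nths mid {j. Suc j \<in> ?U} @ [b]"
    by (simp add: nths_append)
  also have "nths mid {j. Suc j \<in> ?U} = nths mid T"
    by (rule nths_cong_len) auto
  finally show ?thesis by simp
qed

lemma split_frame: "length y \<ge> 2 \<Longrightarrow> y = hd y # strip y @ [last y]"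
  unfolding strip_def
  by (cases y) (auto simp: append_butlast_last_id)

lemma lemB1:
  assumes m: "length y \<ge> 2" and k: "length x \<ge> 2" and h: "hd y = hd x" and l: "last y = last x"
  shows "binom_seq (strip y) (strip x)
       = card {U. U \<subseteq> {0..<length y} \<and> 0 \<in> U \<and> length y - 1 \<in> U \<and> nths y U = x}"
proof -
  define mid where "mid = strip y"
  have y: "y = hd y # mid @ [last y]" unfolding mid_def by (rule split_frame[OF m])
  have x: "x = hd x # strip x @ [last x]" by (rule split_frame[OF k])
  have lm: "length y = Suc (Suc (length mid))" by (subst y) simp
  define f where "f T = insert 0 (insert (Suc (length mid)) (Suc ` T))" for T
  let ?L = "{T. T \<subseteq> {0..<length (strip y)} \<and> card T = length (strip x) \<and> nths (strip y) T = strip x}"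
  let ?R = "{U. U \<subseteq> {0..<length y} \<and> 0 \<in> U \<and> length y - 1 \<in> U \<and> nths y U = x}"
  have key: "nths y (f T) = x \<longleftrightarrow> nths mid T = strip x" if "T \<subseteq> {0..<length mid}" for T
  proof -
    have "nths y (f T) = hd y # nths mid T @ [last y]"
      unfolding f_def by (subst y, rule nths_frame[OF that])
    then have e: "nths y (f T) = hd x # nths mid T @ [last x]" using h l by simp
    obtain c xm d where xx: "x = c # xm @ [d]" using x by blast
    show ?thesis unfolding e xx by (simp add: strip_def)
  qed
  have bk: "T = {j. j < length mid \<and> Suc j \<in> f T}" if "T \<subseteq> {0..<length mid}" for T
    using that unfolding f_def by auto
  have inj: "inj_on f ?L"
  proof (rule inj_onI)
    fix A B assume "A \<in> ?L" "B \<in> ?L" "f A = f B"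
    then show "A = B" using bk[of A] bk[of B] unfolding mid_def by auto
  qed
  have "f ` ?L = ?R"
  proof (rule set_eqI, rule iffI)
    fix U assume "U \<in> f ` ?L"
    then obtain T where T: "T \<in> ?L" and U: "U = f T" by blast
    have Ts: "T \<subseteq> {0..<length mid}" using T mid_def by auto
    show "U \<in> ?R" using T U key[OF Ts] Ts lm unfolding f_def mid_def by auto
  next
    fix U assume U: "U \<in> ?R"
    define T where "T = {j. j < length mid \<and> Suc j \<in> U}"
    have Ts: "T \<subseteq> {0..<length mid}" unfolding T_def by auto
    have fT: "f T = U"
    proof (rule set_eqI)
      fix u show "u \<in> f T \<longleftrightarrow> u \<in> U"
      proof (cases u)
        case 0 then show ?thesis using U unfolding f_def by auto
      next
        case (Suc j)
        have "Suc j \<in> U \<Longrightarrow> j < length mid \<or> j = length mid" using U lm by auto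
        then show ?thesis using U lm Suc unfolding f_def T_def by auto
      qed
    qed
    have "nths mid T = strip x" using key[OF Ts] fT U by simp
    moreover have "card T = length (strip x)"
      using length_nths_sub[OF Ts] calculation by simp
    ultimately have "T \<in> ?L" using Ts unfolding mid_def by simp
    then show "U \<in> f ` ?L" using fT by blast
  qed
  then show ?thesis unfolding binom_seq_def using card_image[OF inj] by simp
qed



definition cnt :: "bool list \<Rightarrow> bool list \<Rightarrow> nat set \<Rightarrow> nat" where
  "cnt s x W = card {V. V \<subseteq> W \<and> Min W \<in> V \<and> Max W \<in> V \<and> nths s V = x}"

lemma sum_sub:
  assumes "finite I" "V \<subseteq> I"
  shows "(\<Sum>W | W \<subseteq> I \<and> V \<subseteq> W. (-1::real)^card W) = (if V = I then (-1)^card I else 0)"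
proof (cases "V = I")
  case True
  then have "{W. W \<subseteq> I \<and> V \<subseteq> W} = {I}" by auto
  then show ?thesis using True by simp
next
  case False
  then have ps: "V \<subset> I" using assms by auto
  have fin: "finite {W. W \<subseteq> I \<and> V \<subseteq> W}" by (rule finite_subset[of _ "Pow I"]) (use assms(1) in auto)
  have "card {W \<in> {W. W \<subseteq> I \<and> V \<subseteq> W}. even (card W)} = card {W \<in> {W. W \<subseteq> I \<and> V \<subseteq> W}. odd (card W)}"
    using card_subsupersets_even_odd[OF assms(1) ps] by (simp add: conj_assoc)
  then have "(\<Sum>W | W \<subseteq> I \<and> V \<subseteq> W. (-1::real)^card W) = 0"
    using sum_alternating_cancels[OF fin, of card] by simp
  then show ?thesis using False by simp
qed

lemma nths_interval: "nths s {i..<i+k} = take k (drop i s)"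
proof -
  have "{i..<i+k} = (+) i ` {..<k}" by (simp add: lessThan_atLeast0 add.commute)
  then show ?thesis by (simp add: nths_drop[symmetric])
qed

lemma occ_as_sets:
  assumes k: "length x \<ge> 1"
  shows "occ x s = card {V \<in> Pow {0..<length s}. nths s V = x \<and> V = {Min V..Max V}}"
proof -
  let ?k = "length x"
  let ?A = "{i. i + ?k \<le> length s \<and> take ?k (drop i s) = x}"
  let ?B = "{V \<in> Pow {0..<length s}. nths s V = x \<and> V = {Min V..Max V}}"
  let ?f = "\<lambda>i. {i..<i + ?k}"
  have inj: "inj_on ?f ?A"
  proof (rule inj_onI)
    fix i j assume "?f i = ?f j"
    moreover have "i \<in> ?f i" "j \<in> ?f j" using k by auto
    ultimately have "i \<in> ?f j" "j \<in> ?f i" by auto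
    then show "i = j" by auto
  qed
  have "?f ` ?A = ?B"
  proof (rule set_eqI, rule iffI)
    fix V assume "V \<in> ?f ` ?A"
    then obtain i where i: "i \<in> ?A" and V: "V = ?f i" by blast
    have "Min V = i" "Max V = i + ?k - 1" using k V by (auto intro!: Min_eqI Max_eqI)
    then have "V = {Min V..Max V}" using V k by auto
    then show "V \<in> ?B" using i V nths_interval[of s i ?k] by auto
  next
    fix V assume V: "V \<in> ?B"
    have fV: "finite V" using V finite_subset by auto
    have cV: "card V = ?k" using V length_nths_sub[of V s] by auto
    then have ne: "V \<noteq> {}" using k by auto
    have "card {Min V..Max V} = ?k" using V cV by simp
    moreover have "Min V \<le> Max V" using fV ne by simp
    ultimately have mx: "Max V + 1 = Min V + ?k" by simp
    have e: "V = {Min V..Max V}" using V by simp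
    have "V = {Min V..<Max V + 1}" unfolding Suc_eq_plus1[symmetric] by (subst atLeastLessThanSuc_atLeastAtMost) (rule e)
    then have "V = ?f (Min V)" using mx by simp
    moreover have "Max V < length s" using V Max_in[OF fV ne] by auto
    ultimately show "V \<in> ?f ` ?A" using V mx nths_interval[of s "Min V" ?k]
      by (intro image_eqI[of _ _ "Min V"]) auto
  qed
  then show ?thesis unfolding occ_def using card_image[OF inj] by simp
qed



lemma inner_V:
  fixes p :: real
  assumes V: "V \<in> Pow {0..<length s}" and k: "length x \<ge> 2"
  shows "(\<Sum>W\<in>Pow {0..<length s}. (if V \<subseteq> W \<and> Min W \<in> V \<and> Max W \<in> V \<and> nths s V = x
          then (-1)^(card W - length x) * p^(Max W + 1 - Min W - length x) else 0))
       = (if nths s V = x \<and> V = {Min V..Max V} then 1 else 0)"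
proof (cases "nths s V = x")
  case False then show ?thesis by simp
next
  case True
  let ?k = "length x"
  let ?P = "Pow {0..<length s}"
  let ?I = "{Min V..Max V}"
  have fV: "finite V" using V finite_subset by auto
  have cV: "card V = ?k" using V True length_nths_sub[of V s] by auto
  then have ne: "V \<noteq> {}" using k by auto
  have IP: "?I \<subseteq> {0..<length s}" using V Max_in[OF fV ne] by auto
  have VI: "V \<subseteq> ?I" using fV by auto
  have mm: "Min W = Min V \<and> Max W = Max V" if a: "V \<subseteq> W" "W \<subseteq> ?I" and W: "W \<in> ?P" for W
  proof -
    have fW: "finite W" using W finite_subset by auto
    have wne: "W \<noteq> {}" using ne a by auto
    have mv: "Min V \<in> W" "Max V \<in> W" using a Min_in[OF fV ne] Max_in[OF fV ne] by auto
    have "Min W \<in> ?I" "Max W \<in> ?I" using a(2) Min_in[OF fW wne] Max_in[OF fW wne] by auto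
    then have "Min V \<le> Min W" "Max W \<le> Max V" by auto
    moreover have "Min W \<le> Min V" "Max V \<le> Max W" using Min_le[OF fW mv(1)] Max_ge[OF fW mv(2)] by auto
    ultimately show ?thesis by simp
  qed
  have C: "(V \<subseteq> W \<and> Min W \<in> V \<and> Max W \<in> V) \<longleftrightarrow> (V \<subseteq> W \<and> W \<subseteq> ?I)" if W: "W \<in> ?P" for W
  proof -
    have fW: "finite W" using W finite_subset by auto
    show ?thesis
    proof
      assume a: "V \<subseteq> W \<and> Min W \<in> V \<and> Max W \<in> V"
      have mv: "Min V \<in> W" "Max V \<in> W" using a Min_in[OF fV ne] Max_in[OF fV ne] by auto
      have "Min W = Min V" using Min_le[OF fW mv(1)] Min_le[OF fV] a by (meson antisym)
      moreover have "Max W = Max V" using Max_ge[OF fW mv(2)] Max_ge[OF fV] a by (meson antisym)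
      moreover have "W \<subseteq> {Min W..Max W}" using fW by auto
      ultimately show "V \<subseteq> W \<and> W \<subseteq> ?I" using a by simp
    next
      assume a: "V \<subseteq> W \<and> W \<subseteq> ?I"
      then have "Min W = Min V \<and> Max W = Max V" using mm W by blast
      then show "V \<subseteq> W \<and> Min W \<in> V \<and> Max W \<in> V" using a Min_in[OF fV ne] Max_in[OF fV ne] by simp
    qed
  qed
  have sp: "Max W = Max V \<and> Min W = Min V" if "V \<subseteq> W" "W \<subseteq> ?I" "W \<in> ?P" for W
    using mm[OF that] by simp
  have "(\<Sum>W\<in>?P. (if V \<subseteq> W \<and> Min W \<in> V \<and> Max W \<in> V \<and> nths s V = x
          then (-1)^(card W - ?k) * p^(Max W + 1 - Min W - ?k) else 0))
      = (\<Sum>W\<in>?P. (if V \<subseteq> W \<and> W \<subseteq> ?I then (-1)^?k * p^(Max V + 1 - Min V - ?k) * (-1)^card W else 0))"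
  proof (rule sum.cong[OF refl])
    fix W assume W: "W \<in> ?P"
    have fW: "finite W" using W finite_subset by auto
    have "(-1::real)^(card W - ?k) = (-1)^?k * (-1)^card W" if "V \<subseteq> W"
    proof -
      have "?k \<le> card W" using card_mono[OF fW that] cV by simp
      then have "(-1::real)^card W = (-1)^(card W - ?k) * (-1)^?k" by (simp flip: power_add)
      then have "(-1)^?k * (-1::real)^card W = (-1)^(card W - ?k) * ((-1)^?k * (-1)^?k)" by simp
      also have "(-1::real)^?k * (-1)^?k = 1" by (simp flip: power_add)
      finally show ?thesis by simp
    qed
    then show "(if V \<subseteq> W \<and> Min W \<in> V \<and> Max W \<in> V \<and> nths s V = x
          then (-1)^(card W - ?k) * p^(Max W + 1 - Min W - ?k) else 0) =
      (if V \<subseteq> W \<and> W \<subseteq> ?I then (-1)^?k * p^(Max V + 1 - Min V - ?k) * (-1)^card W else 0)"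
      using C[OF W] sp[OF _ _ W] True by (auto simp: mult_ac)
  qed
  also have "\<dots> = (-1)^?k * p^(Max V + 1 - Min V - ?k) * (\<Sum>W | W \<subseteq> ?I \<and> V \<subseteq> W. (-1)^card W)"
  proof -
    have "{W. W \<subseteq> ?I \<and> V \<subseteq> W} = {W \<in> ?P. V \<subseteq> W \<and> W \<subseteq> ?I}" using IP by auto
    moreover have "(\<Sum>W\<in>?P. (if V \<subseteq> W \<and> W \<subseteq> ?I then (-1)^?k * p^(Max V + 1 - Min V - ?k) * (-1)^card W else 0))
       = (\<Sum>W\<in>{W \<in> ?P. V \<subseteq> W \<and> W \<subseteq> ?I}. (-1)^?k * p^(Max V + 1 - Min V - ?k) * (-1)^card W)"
      by (rule sum.inter_filter[symmetric]) simp
    ultimately show ?thesis by (simp only: sum_distrib_left)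
  qed
  also have "\<dots> = (if V = ?I then 1 else 0)"
  proof (cases "V = ?I")
    case True
    have "card ?I = ?k" using True cV by simp
    moreover have "Max V + 1 - Min V - ?k = 0" using calculation by simp
    moreover have m1: "(-1::real)^?k * (-1)^?k = 1" by (simp flip: power_add)
    ultimately show ?thesis using sum_sub[OF finite_atLeastAtMost VI] True by simp
  next
    case False
    then show ?thesis using sum_sub[OF finite_atLeastAtMost VI] by simp
  qed
  finally show ?thesis using True by simp
qed

lemma Zlemma:
  fixes p :: real
  assumes k: "length x \<ge> 2"
  shows "(\<Sum>W\<in>Pow {0..<length s}. (-1)^(card W - length x) * p^(Max W + 1 - Min W - length x) * real (cnt s x W))
     = real (occ x s)"
proof -
  let ?P = "Pow {0..<length s}"
  have fP: "finite ?P" by simp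
  have cW: "real (cnt s x W) = (\<Sum>V\<in>?P. (if V \<subseteq> W \<and> Min W \<in> V \<and> Max W \<in> V \<and> nths s V = x then 1 else 0))"
    if "W \<in> ?P" for W
  proof -
    have "{V. V \<subseteq> W \<and> Min W \<in> V \<and> Max W \<in> V \<and> nths s V = x} = {V \<in> ?P. V \<subseteq> W \<and> Min W \<in> V \<and> Max W \<in> V \<and> nths s V = x}"
      using that by auto
    then show ?thesis unfolding cnt_def by (simp only: real_of_card sum.inter_filter[OF fP])
  qed
  have "(\<Sum>W\<in>?P. (-1)^(card W - length x) * p^(Max W + 1 - Min W - length x) * real (cnt s x W))
     = (\<Sum>W\<in>?P. \<Sum>V\<in>?P. (if V \<subseteq> W \<and> Min W \<in> V \<and> Max W \<in> V \<and> nths s V = x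
          then (-1)^(card W - length x) * p^(Max W + 1 - Min W - length x) else 0))"
    by (rule sum.cong[OF refl]) (auto simp: cW sum_distrib_left intro!: sum.cong)
  also have "\<dots> = (\<Sum>V\<in>?P. \<Sum>W\<in>?P. (if V \<subseteq> W \<and> Min W \<in> V \<and> Max W \<in> V \<and> nths s V = x
          then (-1)^(card W - length x) * p^(Max W + 1 - Min W - length x) else 0))"
    by (rule sum.swap)
  also have "\<dots> = (\<Sum>V\<in>?P. (if nths s V = x \<and> V = {Min V..Max V} then 1 else 0))"
    by (rule sum.cong[OF refl]) (rule inner_V[OF _ k])
  also have "\<dots> = real (card {V \<in> ?P. nths s V = x \<and> V = {Min V..Max V}})"
    by (simp only: real_of_card sum.inter_filter[OF fP])
  also have "\<dots> = real (occ x s)" using occ_as_sets[of x s] k by simp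
  finally show ?thesis .
qed



lemma lemB:
  assumes W: "W \<subseteq> {0..<length s}" and c: "card W \<ge> 2" and k: "length x \<ge> 2"
    and h: "hd (nths s W) = hd x" and l: "last (nths s W) = last x"
  shows "binom' (nths s W) x = cnt s x W"
proof -
  have ly: "length (nths s W) = card W" using length_nths_sub[OF W] .
  have ne: "W \<noteq> {}" using c by auto
  show ?thesis
    unfolding binom'_def lemB1[of "nths s W" x, OF _ k h l, unfolded ly, OF c] cnt_def
    using lemB2[OF W ne] by simp
qed

lemma cnt_Y:
  assumes W: "W \<subseteq> {0..<length s}" and ne: "W \<noteq> {}" and nz: "cnt s x W \<noteq> 0"
  shows "nths s W \<in> Yset (card W) x"
proof -
  have f: "finite W" using W finite_subset by auto
  obtain V where V: "V \<subseteq> W" "Min W \<in> V" "Max W \<in> V" "nths s V = x"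
    using nz unfolding cnt_def by (metis (mono_tags, lifting) card.empty empty_Collect_eq)
  define y where "y = nths s W"
  define U where "U = rk W ` V"
  have ly: "length y = card W" using length_nths_sub[OF W] y_def by simp
  have xy: "nths y U = x" unfolding y_def U_def using nths_rk[OF f V(1), of s] V(4) by simp
  have U0: "0 \<in> U" unfolding U_def using V rk_Min[OF f ne] by force
  have U1: "length y - 1 \<in> U" unfolding U_def using V rk_Max[OF f ne] ly by force
  have yne: "y \<noteq> []" using ly ne f by auto
  obtain a t where yat: "y = a # t" using yne by (cases y) auto
  have "x = a # nths t {j. Suc j \<in> U}" using xy U0 by (simp add: yat nths_Cons)
  then have hx: "hd x = hd y" using yat by simp
  obtain t' b where ytb: "y = t' @ [b]" using yne by (metis rev_exhaust)
  have "x = nths t' U @ [b]" using xy U1 by (simp add: ytb nths_append)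
  then have lx: "last x = last y" using ytb by simp
  have "subseq x y" using xy subseq_conv_nths by metis
  then show ?thesis unfolding Yset_def using ly hx lx y_def by simp
qed

lemma cnt_k:
  assumes W: "W \<subseteq> {0..<length s}" and c: "card W = length x" and k: "length x \<ge> 2"
  shows "cnt s x W = (if nths s W = x then 1 else 0)"
proof -
  have f: "finite W" using W finite_subset by auto
  have ne: "W \<noteq> {}" using c k by auto
  have "{V. V \<subseteq> W \<and> Min W \<in> V \<and> Max W \<in> V \<and> nths s V = x} = (if nths s W = x then {W} else {})"
  proof (rule set_eqI)
    fix V
    show "V \<in> {V. V \<subseteq> W \<and> Min W \<in> V \<and> Max W \<in> V \<and> nths s V = x} \<longleftrightarrow> V \<in> (if nths s W = x then {W} else {})"
    proof
      assume a: "V \<in> {V. V \<subseteq> W \<and> Min W \<in> V \<and> Max W \<in> V \<and> nths s V = x}"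
      then have "card V = length x" using length_nths_sub[of V s] W by auto
      then have "V = W" using a card_subset_eq[OF f] c by auto
      then show "V \<in> (if nths s W = x then {W} else {})" using a by auto
    next
      assume "V \<in> (if nths s W = x then {W} else {})"
      then show "V \<in> {V. V \<subseteq> W \<and> Min W \<in> V \<and> Max W \<in> V \<and> nths s V = x}"
        using Min_in[OF f ne] Max_in[OF f ne] by (auto split: if_splits)
    qed
  qed
  then show ?thesis unfolding cnt_def by simp
qed

lemma cnt_lt:
  assumes W: "W \<subseteq> {0..<length s}" and c: "card W < length x"
  shows "cnt s x W = 0"
proof -
  have f: "finite W" using W finite_subset by auto
  have e: "{V. V \<subseteq> W \<and> Min W \<in> V \<and> Max W \<in> V \<and> nths s V = x} = {}"
  proof (rule ccontr)
    assume "{V. V \<subseteq> W \<and> Min W \<in> V \<and> Max W \<in> V \<and> nths s V = x} \<noteq> {}"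
    then obtain V where "V \<subseteq> W" "nths s V = x" by auto
    then have "card V = length x" "card V \<le> card W" using length_nths_sub[of V s] W card_mono[OF f] by auto
    then show False using c by simp
  qed
  show ?thesis unfolding cnt_def e by simp
qed

lemma alg:
  fixes q p :: real
  assumes "q \<noteq> 0" "k \<le> i" "i \<le> L"
  shows "q^i * p^(L-i) * (p/q)^(i-k) = q^k * p^(L-k)"
proof -
  obtain a where a: "i = k + a" using assms(2) le_Suc_ex by blast
  obtain b where b: "L = i + b" using assms(3) le_Suc_ex by blast
  have "L - i = b" "i - k = a" "L - k = a + b" using a b by auto
  then show ?thesis using assms(1) a by (simp add: power_add power_divide field_simps)
qed

lemma finite_Yset: "finite (Yset i x)"
proof -
  have "Yset i x \<subseteq> {xs. set xs \<subseteq> UNIV \<and> length xs = i}" unfolding Yset_def by auto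
  then show ?thesis using finite_lists_length_eq[of "UNIV :: bool set" i] finite_subset by auto
qed



lemma step2:
  fixes p :: real
  assumes q: "1 - p \<noteq> 0" and k: "length x \<ge> 2" and i: "length x + 1 \<le> i"
  shows "(\<Sum>y\<in>Yset i x. (-1) ^ (length y - length x + 1) * exp_occ p s y * real (binom' y x)
             * (p / (1 - p)) ^ (i - length x))
    = (\<Sum>W\<in>Pow {0..<length s}. (if card W = i then (-1)^(i - length x + 1) * (1-p)^length x
             * p^(Max W + 1 - Min W - length x) * real (cnt s x W) else 0))"
proof -
  let ?k = "length x" and ?P = "Pow {0..<length s}" and ?Y = "Yset i x"
  let ?r = "p / (1 - p)"
  define G where "G W = (-1)^(i - ?k + 1) * ((1-p)^i * p^(Max W + 1 - Min W - i)) * real (binom' (nths s W) x) * ?r^(i - ?k)" for W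
  have "(\<Sum>y\<in>?Y. (-1) ^ (length y - ?k + 1) * exp_occ p s y * real (binom' y x) * ?r ^ (i - ?k))
      = (\<Sum>y\<in>?Y. \<Sum>W\<in>?P. (if nths s W = y then G W else 0))"
  proof (rule sum.cong[OF refl])
    fix y assume y: "y \<in> ?Y"
    then have ly: "length y = i" unfolding Yset_def by simp
    then have yne: "y \<noteq> []" using i k by auto
    show "(-1) ^ (length y - ?k + 1) * exp_occ p s y * real (binom' y x) * ?r ^ (i - ?k)
       = (\<Sum>W\<in>?P. (if nths s W = y then G W else 0))"
      unfolding lemA[OF yne] ER_def sum_distrib_left sum_distrib_right ly
      by (rule sum.cong[OF refl]) (auto simp: G_def ly)
  qed
  also have "\<dots> = (\<Sum>W\<in>?P. \<Sum>y\<in>?Y. (if nths s W = y then G W else 0))" by (rule sum.swap)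
  also have "\<dots> = (\<Sum>W\<in>?P. (if nths s W \<in> ?Y then G W else 0))"
    by (rule sum.cong[OF refl]) (simp add: sum.delta finite_Yset)
  also have "\<dots> = (\<Sum>W\<in>?P. (if card W = i then (-1)^(i - ?k + 1) * (1-p)^?k
             * p^(Max W + 1 - Min W - ?k) * real (cnt s x W) else 0))"
  proof (rule sum.cong[OF refl])
    fix W assume W: "W \<in> ?P"
    have Ws: "W \<subseteq> {0..<length s}" using W by simp
    have fW: "finite W" using W finite_subset by auto
    show "(if nths s W \<in> ?Y then G W else 0) = (if card W = i then (-1)^(i - ?k + 1) * (1-p)^?k
             * p^(Max W + 1 - Min W - ?k) * real (cnt s x W) else 0)"
    proof (cases "nths s W \<in> ?Y")
      case True
      have cW: "card W = i" using True length_nths_sub[OF Ws] unfolding Yset_def by simp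
      then have ne: "W \<noteq> {}" using i k by auto
      have hl: "hd (nths s W) = hd x" "last (nths s W) = last x" using True unfolding Yset_def by auto
      have b: "binom' (nths s W) x = cnt s x W" using lemB[OF Ws _ k hl] cW i k by simp
      have sp: "i \<le> Max W + 1 - Min W" using card_le_span[OF fW ne] cW by simp
      have "(1-p)^i * p^(Max W + 1 - Min W - i) * ?r^(i - ?k) = (1-p)^?k * p^(Max W + 1 - Min W - ?k)"
        using alg[OF q, of ?k i "Max W + 1 - Min W" p] sp i by simp
      then show ?thesis using True cW b unfolding G_def by (simp add: mult_ac)
    next
      case False
      have "card W = i \<Longrightarrow> cnt s x W = 0"
        using cnt_Y[OF Ws] False i k by fastforce
      then show ?thesis using False by simp
    qed
  qed
  finally show ?thesis .
qed

theorem lemma4: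
  fixes s x :: "bool list" and p :: real
  assumes "0 \<le> p" and "p < 1" and "length x \<ge> 2"
  shows "real (occ x s) =
    1 / (1 - p) ^ length x *
      (exp_occ p s x -
        (\<Sum>i = length x + 1..length s. \<Sum>y\<in>Yset i x.
           (-1) ^ (length y - length x + 1) * exp_occ p s y * real (binom' y x)
             * (p / (1 - p)) ^ (i - length x)))"
proof -
  let ?k = "length x" and ?P = "Pow {0..<length s}"
  have q: "1 - p \<noteq> 0" using assms by simp
  have k: "?k \<ge> 2" using assms by simp
  define g where "g i W = (-1)^(i - ?k + 1) * (1-p)^?k * p^(Max W + 1 - Min W - ?k) * real (cnt s x W)" for i W
  have S: "(\<Sum>i = ?k + 1..length s. \<Sum>y\<in>Yset i x.
           (-1) ^ (length y - ?k + 1) * exp_occ p s y * real (binom' y x) * (p / (1 - p)) ^ (i - ?k))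
     = (\<Sum>W\<in>?P. (if ?k + 1 \<le> card W then g (card W) W else 0))"
  proof -
    have "(\<Sum>i = ?k + 1..length s. \<Sum>y\<in>Yset i x.
           (-1) ^ (length y - ?k + 1) * exp_occ p s y * real (binom' y x) * (p / (1 - p)) ^ (i - ?k))
       = (\<Sum>i = ?k + 1..length s. \<Sum>W\<in>?P. (if card W = i then g i W else 0))"
    proof (rule sum.cong[OF refl])
      fix i assume "i \<in> {?k + 1..length s}"
      then have i: "?k + 1 \<le> i" by simp
      show "(\<Sum>y\<in>Yset i x.
           (-1) ^ (length y - ?k + 1) * exp_occ p s y * real (binom' y x) * (p / (1 - p)) ^ (i - ?k))
        = (\<Sum>W\<in>?P. (if card W = i then g i W else 0))"
        unfolding step2[OF q k i] g_def by (rule refl)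
    qed
    also have "\<dots> = (\<Sum>W\<in>?P. \<Sum>i = ?k + 1..length s. (if card W = i then g i W else 0))"
      by (rule sum.swap)
    also have "\<dots> = (\<Sum>W\<in>?P. (if ?k + 1 \<le> card W then g (card W) W else 0))"
    proof (rule sum.cong[OF refl])
      fix W assume W: "W \<in> ?P"
      have "card W \<le> length s" using card_mono[of "{0..<length s}" W] W by simp
      then show "(\<Sum>i = ?k + 1..length s. (if card W = i then g i W else 0)) = (if ?k + 1 \<le> card W then g (card W) W else 0)"
        by (simp add: sum.delta')
    qed
    finally show ?thesis .
  qed
  have E: "exp_occ p s x = (\<Sum>W\<in>?P. (if card W = ?k then (1-p)^?k * p^(Max W + 1 - Min W - ?k) * real (cnt s x W) else 0))"
    unfolding lemA[of x, OF _] 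
  proof -
    have xne: "x \<noteq> []" using k by auto
    show ?thesis unfolding lemA[OF xne] ER_def
    proof (rule sum.cong[OF refl])
      fix W assume W: "W \<in> ?P"
      have Ws: "W \<subseteq> {0..<length s}" using W by simp
      show "(if nths s W = x then (1-p)^?k * p^(Max W + 1 - Min W - ?k) else 0) =
        (if card W = ?k then (1-p)^?k * p^(Max W + 1 - Min W - ?k) * real (cnt s x W) else 0)"
        using cnt_k[OF Ws _ k] length_nths_sub[OF Ws] by auto
    qed
  qed
  have "exp_occ p s x - (\<Sum>i = ?k + 1..length s. \<Sum>y\<in>Yset i x.
           (-1) ^ (length y - ?k + 1) * exp_occ p s y * real (binom' y x) * (p / (1 - p)) ^ (i - ?k))
     = (\<Sum>W\<in>?P. (1-p)^?k * ((-1)^(card W - ?k) * p^(Max W + 1 - Min W - ?k) * real (cnt s x W)))"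
    unfolding S E sum_subtractf[symmetric]
  proof (rule sum.cong[OF refl])
    fix W assume W: "W \<in> ?P"
    have Ws: "W \<subseteq> {0..<length s}" using W by simp
    consider "card W < ?k" | "card W = ?k" | "?k + 1 \<le> card W" by linarith
    then show "(if card W = ?k then (1-p)^?k * p^(Max W + 1 - Min W - ?k) * real (cnt s x W) else 0)
        - (if ?k + 1 \<le> card W then g (card W) W else 0)
      = (1-p)^?k * ((-1)^(card W - ?k) * p^(Max W + 1 - Min W - ?k) * real (cnt s x W))"
    proof cases
      case 1 then show ?thesis using cnt_lt[OF Ws] by simp
    next
      case 2 then show ?thesis by simp
    next
      case 3
      then have "card W - ?k + 1 = Suc (card W - ?k)" by simp
      then show ?thesis using 3 unfolding g_def by (simp add: mult_ac)
    qed
  qed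
  also have "\<dots> = (1-p)^?k * real (occ x s)"
    unfolding sum_distrib_left[symmetric] Zlemma[OF k] ..
  finally show ?thesis using q by simp
qed


end
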